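(* Consider the age-structured multispecies map $h$ described in the context, and suppose $\bm{y}^\ast=h(\bm{y}^\ast)$ is an equilibrium whose adult part is an interior equilibrium $\bm{x}^\ast=(y^\ast_{\delta_1\mid 1},\dots,y^\ast_{\delta_m\mid m})^\top>\bm{0}$ (all entries positive). Let $\bm{J}^\ast$ be the $n\times n$ Jacobian of $h$ at $\bm{y}^\ast$, $n=m+\sum_{i}\delta_i$, and let a permutation bring $\bm{J}^\ast$ to lower block-triangular form whose diagonal blocks $\bm{J}^\ast(\alpha_w,\alpha_w)$, $w=1,\dots,r$, are square and either irreducible or a $1\times 1$ zero, where $\alpha_1,\dots,\alpha_r$ is the corresponding partition of the index set. For each $w$ let $\mathcal{D}_w\subseteq\mathcal{M}$ be the set of species having nodes (age classes) in $\alpha_w$. If for every $w\in\{1,\dots,r\}$ and every $i\in\mathcal{D}_w$ $$\Bigl\{\Bigl|G_i(\bm{x}^\ast)+x_i^\ast\tfrac{\partial G_i}{\partial x_i}(\bm{x}^\ast)\Bigr| + \sum_{j\in\mathcal{D}_w\setminus\{i\}}\Bigl|x_i^\ast\tfrac{\partial G_i}{\partial x_j}(\bm{x}^\ast)\Bigr|\Bigr\}\prod_{a=0}^{\delta_i-1}\sigma_{a\mid i} \;<\; z_i,$$ then $\rho(\bm{J}^\ast)<1$, i.e. the equilibrium is locally asymptotically stable.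
   Context: Let $m\ge 1$ and $\mathcal{M}=\{1,\dots,m\}$. For each species $i\in\mathcal{M}$: a maturation delay $\delta_i\in\{0,1,2,\dots\}$; immature survival probabilities $\sigma_{a\mid i}\in(0,1]$ for $a=0,\dots,\delta_i-1$; an adult survival probability $\sigma_{\delta_i\mid i}\in(0,1)$ with adult mortality $z_i=1-\sigma_{\delta_i\mid i}$; an empty product $\prod_{a=0}^{-1}$ equals $1$. Each $G_i:\mathbb{R}^m\to\mathbb{R}$ is a differentiable per capita growth function. The state is $\bm{y}=(y_{a\mid i})$, indexed by $i\in\mathcal{M}$, $a\in\{0,\dots,\delta_i\}$ (ordered species by species), of dimension $n=m+\sum_i\delta_i$; the adult vector is $\bm{x}=(y_{\delta_1\mid 1},\dots,y_{\delta_m\mid m})^\top$. The map $h:\mathbb{R}^n\to\mathbb{R}^n$ is: if $\delta_i>0$, $h_{0\mid i}(\bm{y})=G_i(\bm{x})\,y_{\delta_i\mid i}$, $h_{a\mid i}(\bm{y})=\sigma_{a-1\mid i}y_{a-1\mid i}$ for $1\le a\le\delta_i-1$, and $h_{\delta_i\mid i}(\bm{y})=\sigma_{\delta_i-1\mid i}y_{\delta_i-1\mid i}+\sigma_{\delta_i\mid i}y_{\delta_i\mid i}$; if $\delta_i=0$, $h_{0\mid i}(\bm{y})=\sigma_{0\mid i}y_{0\mid i}+G_i(\bm{x})y_{0\mid i}$. (This is equivalent to the delay system $x_i(t+1)=\sigma_{\delta_i\mid i}x_i(t)+x_i(t-\delta_i)G_i(\bm{x}(t-\delta_i))\prod_{a=0}^{\delta_i-1}\sigma_{a\mid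 i}$.) The Jacobian $\bm{J}^\ast$ at an equilibrium $\bm{y}^\ast$ has entries $\partial h_{a\mid i}/\partial y_{b\mid j}$ evaluated at $\bm{y}^\ast$; in particular the entry of row $(0\mid i)$, column $(\delta_i\mid i)$ is $G_i(\bm{x}^\ast)+x_i^\ast\partial G_i/\partial x_i(\bm{x}^\ast)$ (plus $\sigma_{0\mid i}$ if $\delta_i=0$) and the entry of row $(0\mid i)$, column $(\delta_j\mid j)$, $j\neq i$, is $x_i^\ast\partial G_i/\partial x_j(\bm{x}^\ast)$. $\rho(\cdot)$ denotes spectral radius. An equilibrium is called locally asymptotically stable if $\rho(\bm{J}^\ast)<1$. *)

theory Defs
  imports "HOL-Analysis.Analysis"
begin

text \<open>Species are the elements of a finite type 'm (so m = CARD('m) \<ge> 1).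
  A node (age class) is a pair (i, a) with a \<le> \<delta> i.  States are functions on nodes.\<close>

definition nodes :: "('m::finite \<Rightarrow> nat) \<Rightarrow> ('m \<times> nat) set" where
  "nodes \<delta> = {(i, a). a \<le> \<delta> i}"

definition adults :: "('m::finite \<Rightarrow> nat) \<Rightarrow> ('m \<times> nat \<Rightarrow> real) \<Rightarrow> real ^ 'm" where
  "adults \<delta> y = (\<chi> i. y (i, \<delta> i))"

text \<open>The map h (components outside the node set are set to 0).\<close>
definition hmap :: "('m::finite \<Rightarrow> nat) \<Rightarrow> ('m \<Rightarrow> nat \<Rightarrow> real) \<Rightarrow> ('m \<Rightarrow> real ^ 'm \<Rightarrow> real)
    \<Rightarrow> ('m \<times> nat \<Rightarrow> real) \<Rightarrow> ('m \<times> nat \<Rightarrow> real)" where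
  "hmap \<delta> \<sigma> G y = (\<lambda>(i, a).
     if 0 < \<delta> i then
       (if a = 0 then G i (adults \<delta> y) * y (i, \<delta> i)
        else if a < \<delta> i then \<sigma> i (a - 1) * y (i, a - 1)
        else if a = \<delta> i then \<sigma> i (a - 1) * y (i, a - 1) + \<sigma> i (\<delta> i) * y (i, \<delta> i)
        else 0)
     else
       (if a = 0 then \<sigma> i 0 * y (i, 0) + G i (adults \<delta> y) * y (i, 0) else 0))"

definition jacobian :: "('m::finite \<Rightarrow> nat) \<Rightarrow> ('m \<Rightarrow> nat \<Rightarrow> real) \<Rightarrow> ('m \<Rightarrow> real ^ 'm \<Rightarrow> real)
    \<Rightarrow> ('m \<times> nat \<Rightarrow> real) \<Rightarrow> ('m \<times> nat) \<Rightarrow> ('m \<times> nat) \<Rightarrow> real" where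
  "jacobian \<delta> \<sigma> G y p q = deriv (\<lambda>t. hmap \<delta> \<sigma> G (y(q := t)) p) (y q)"

definition pderiv_at :: "(real ^ 'm::finite \<Rightarrow> real) \<Rightarrow> real ^ 'm \<Rightarrow> 'm \<Rightarrow> real" where
  "pderiv_at f x j = frechet_derivative f (at x) (axis j 1)"

definition is_eigenvalue_on :: "'a set \<Rightarrow> ('a \<Rightarrow> 'a \<Rightarrow> real) \<Rightarrow> complex \<Rightarrow> bool" where
  "is_eigenvalue_on N A c \<longleftrightarrow>
     (\<exists>v :: 'a \<Rightarrow> complex. (\<exists>p\<in>N. v p \<noteq> 0) \<and>
        (\<forall>p\<in>N. (\<Sum>q\<in>N. complex_of_real (A p q) * v q) = c * v p))"

definition spectral_radius_on :: "'a set \<Rightarrow> ('a \<Rightarrow> 'a \<Rightarrow> real) \<Rightarrow> real" where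
  "spectral_radius_on N A = Max {cmod c | c. is_eigenvalue_on N A c}"

text \<open>Irreducibility of the principal submatrix A(S,S): its directed graph
  (edge p \<rightarrow> q iff A p q \<noteq> 0, p q \<in> S) is strongly connected
  (for a 1x1 block this means the entry is nonzero).\<close>
definition irreducible_block :: "'a set \<Rightarrow> ('a \<Rightarrow> 'a \<Rightarrow> real) \<Rightarrow> bool" where
  "irreducible_block S A \<longleftrightarrow>
     (\<forall>p\<in>S. \<forall>q\<in>S. (p, q) \<in> {(u, v). u \<in> S \<and> v \<in> S \<and> A u v \<noteq> 0}\<^sup>+)"

end

theory Submission
  imports Defs "Jordan_Normal_Form.Spectral_Radius"
begin


lemma eig_fin_ne:
  fixes A :: "'a \<Rightarrow> 'a \<Rightarrow> real"
  assumes fin: "finite N" and ne: "N \<noteq> {}"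
  shows "finite {c. is_eigenvalue_on N A c} \<and> {c. is_eigenvalue_on N A c} \<noteq> {}"
proof -
  define n where "n = card N"
  obtain f where f: "bij_betw f {0..<n} N"
    using ex_bij_betw_nat_finite[OF fin] n_def by blast
  have npos: "n > 0" using fin ne n_def by (simp add: card_gt_0_iff)
  define M where "M = mat n n (\<lambda>(k,l). complex_of_real (A (f k) (f l)))"
  have Mc: "M \<in> carrier_mat n n" unfolding M_def by simp
  have reidx: "\<And>k w. k < n \<Longrightarrow> dim_vec w = n \<Longrightarrow> (M *\<^sub>v w) $ k = (\<Sum>l\<in>{0..<n}. complex_of_real (A (f k) (f l)) * w $ l)"
    unfolding M_def by (simp add: scalar_prod_def)
  have sub: "{c. is_eigenvalue_on N A c} \<subseteq> spectrum M"
  proof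
    fix c assume "c \<in> {c. is_eigenvalue_on N A c}"
    then obtain v p where pN: "p \<in> N" and vp: "v p \<noteq> 0"
      and eq: "\<forall>p\<in>N. (\<Sum>q\<in>N. complex_of_real (A p q) * v q) = c * v p"
      unfolding is_eigenvalue_on_def by blast
    define w where "w = vec n (\<lambda>k. v (f k))"
    obtain k where k: "k < n" "f k = p" using f pN unfolding bij_betw_def by auto
    have "w \<noteq> 0\<^sub>v n" using k vp unfolding w_def by (metis index_vec index_zero_vec(1))
    moreover have "M *\<^sub>v w = c \<cdot>\<^sub>v w"
    proof (rule eq_vecI)
      fix j assume "j < dim_vec (c \<cdot>\<^sub>v w)"
      hence j: "j < n" unfolding w_def by simp
      have "(M *\<^sub>v w) $ j = (\<Sum>l\<in>{0..<n}. complex_of_real (A (f j) (f l)) * v (f l))"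
        using reidx[of j w] j unfolding w_def by simp
      also have "\<dots> = (\<Sum>q\<in>N. complex_of_real (A (f j) q) * v q)"
        using sum.reindex_bij_betw[OF f, of "\<lambda>q. complex_of_real (A (f j) q) * v q"] by simp
      also have "\<dots> = c * v (f j)" using eq f j unfolding bij_betw_def by auto
      finally show "(M *\<^sub>v w) $ j = (c \<cdot>\<^sub>v w) $ j" using j unfolding w_def by simp
    next
      show "dim_vec (M *\<^sub>v w) = dim_vec (c \<cdot>\<^sub>v w)" unfolding M_def w_def by simp
    qed
    moreover have "w \<in> carrier_vec n" unfolding w_def by simp
    ultimately show "c \<in> spectrum M" unfolding spectrum_def eigenvalue_def eigenvector_def
      using Mc by auto
  qed
  have sup: "spectrum M \<subseteq> {c. is_eigenvalue_on N A c}"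
  proof
    fix c assume "c \<in> spectrum M"
    then obtain w where w: "w \<in> carrier_vec n" "w \<noteq> 0\<^sub>v n" "M *\<^sub>v w = c \<cdot>\<^sub>v w"
      unfolding spectrum_def eigenvalue_def eigenvector_def using Mc by auto
    define g where "g = inv_into {0..<n} f"
    have gf: "\<And>k. k < n \<Longrightarrow> g (f k) = k" unfolding g_def using f
      by (simp add: bij_betw_def)
    define v where "v p = w $ (g p)" for p
    obtain k where k: "k < n" "w $ k \<noteq> 0" using w
      by (metis carrier_vecD eq_vecI index_zero_vec(1) index_zero_vec(2))
    have ex: "\<exists>p\<in>N. v p \<noteq> 0"
      using k gf f unfolding v_def bij_betw_def by (intro bexI[of _ "f k"]) auto
    have "\<forall>p\<in>N. (\<Sum>q\<in>N. complex_of_real (A p q) * v q) = c * v p"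
    proof
      fix p assume pN: "p \<in> N"
      obtain j where j: "j < n" "f j = p" using f pN unfolding bij_betw_def by auto
      have "(\<Sum>q\<in>N. complex_of_real (A p q) * v q)
          = (\<Sum>l\<in>{0..<n}. complex_of_real (A (f j) (f l)) * v (f l))"
        using sum.reindex_bij_betw[OF f, of "\<lambda>q. complex_of_real (A (f j) q) * v q"] j by simp
      also have "\<dots> = (\<Sum>l\<in>{0..<n}. complex_of_real (A (f j) (f l)) * w $ l)"
        using gf unfolding v_def by (intro sum.cong) auto
      also have "\<dots> = (M *\<^sub>v w) $ j" using reidx[of j w] j w by simp
      also have "\<dots> = c * v p" using w j gf unfolding v_def by auto
      finally show "(\<Sum>q\<in>N. complex_of_real (A p q) * v q) = c * v p" .
    qed
    with ex show "c \<in> {c. is_eigenvalue_on N A c}" unfolding is_eigenvalue_on_def by auto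
  qed
  show ?thesis using sub sup card_finite_spectrum(1)[OF Mc] spectrum_non_empty[OF Mc npos]
    by (metis finite_subset subset_empty)
qed


lemma weighted_bound:
  fixes A :: "'a \<Rightarrow> 'a \<Rightarrow> real" and u :: "'a \<Rightarrow> complex" and v :: "'a \<Rightarrow> real"
  assumes fin: "finite S"
    and eq: "\<forall>p\<in>S. (\<Sum>q\<in>S. complex_of_real (A p q) * u q) = c * u p"
    and nz: "\<exists>p\<in>S. u p \<noteq> 0" and vpos: "\<forall>p\<in>S. v p > 0"
    and rows: "\<forall>p\<in>S. (\<Sum>q\<in>S. \<bar>A p q\<bar> * v q) < v p"
  shows "cmod c < 1"
proof -
  define M where "M = Max ((\<lambda>p. cmod (u p) / v p) ` S)"
  have Sne: "S \<noteq> {}" using nz by auto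
  have "M \<in> (\<lambda>p. cmod (u p) / v p) ` S"
    using Max_in[of "(\<lambda>p. cmod (u p) / v p) ` S"] fin Sne unfolding M_def by auto
  then obtain p0 where p0: "p0 \<in> S" "M = cmod (u p0) / v p0" by auto
  have bnd: "\<forall>q\<in>S. cmod (u q) \<le> M * v q"
  proof
    fix q assume q: "q \<in> S"
    have "cmod (u q) / v q \<le> M" unfolding M_def using fin q by (intro Max_ge) auto
    thus "cmod (u q) \<le> M * v q" using vpos q by (simp add: pos_divide_le_eq)
  qed
  obtain p1 where p1: "p1 \<in> S" "u p1 \<noteq> 0" using nz by auto
  have "0 < cmod (u p1) / v p1" using p1 vpos by auto
  also have "\<dots> \<le> M" unfolding M_def using fin p1 by (intro Max_ge) auto
  finally have Mpos: "M > 0" .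
  have up0: "cmod (u p0) > 0" using p0 Mpos vpos by (metis divide_eq_0_iff less_irrefl norm_zero zero_less_norm_iff)
  have "cmod c * cmod (u p0) = cmod (\<Sum>q\<in>S. complex_of_real (A p0 q) * u q)"
    using eq p0 by (simp add: norm_mult)
  also have "\<dots> \<le> (\<Sum>q\<in>S. cmod (complex_of_real (A p0 q) * u q))" by (rule norm_sum)
  also have "\<dots> = (\<Sum>q\<in>S. \<bar>A p0 q\<bar> * cmod (u q))" by (simp add: norm_mult)
  also have "\<dots> \<le> (\<Sum>q\<in>S. \<bar>A p0 q\<bar> * (M * v q))"
    using bnd by (intro sum_mono mult_left_mono) auto
  also have "\<dots> = M * (\<Sum>q\<in>S. \<bar>A p0 q\<bar> * v q)" by (simp add: sum_distrib_left algebra_simps)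
  also have "\<dots> < M * v p0" using rows p0 Mpos by (intro mult_strict_left_mono) auto
  also have "\<dots> = cmod (u p0)" using p0 vpos by auto
  finally have "cmod c * cmod (u p0) < 1 * cmod (u p0)" by simp
  thus ?thesis using up0 by (meson mult_less_cancel_right_pos)
qed


lemma upd_deriv: "((\<lambda>t. (y(q:=t)) r) has_real_derivative (if q = r then 1 else 0)) (at s)"
proof (cases "q = r")
  case True
  then show ?thesis by (simp add: DERIV_ident)
next
  case False
  then show ?thesis by simp
qed

lemma G_part:
  fixes G :: "real ^ 'm::finite \<Rightarrow> real" and \<delta> :: "'m \<Rightarrow> nat"
  assumes Gd: "\<And>x. G differentiable (at x)"
  shows "((\<lambda>t. G (adults \<delta> (y(q:=t))) * (y(q:=t)) (i, \<delta> i)) has_real_derivative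
    (if snd q = \<delta> (fst q) then y (i, \<delta> i) * pderiv_at G (adults \<delta> y) (fst q)
        + (if fst q = i then G (adults \<delta> y) else 0) else 0)) (at (y q))"
proof -
  obtain j c where q: "q = (j, c)" by fastforce
  define x where "x = adults \<delta> y"
  show ?thesis
  proof (cases "c = \<delta> j")
    case False
    have "adults \<delta> (y(q:=t)) = x" for t
      using False q unfolding x_def adults_def by (simp add: Finite_Cartesian_Product.vec_eq_iff)
    moreover have "(y(q:=t)) (i, \<delta> i) = y (i, \<delta> i)" for t using False q by auto
    ultimately have "(\<lambda>t. G (adults \<delta> (y(q:=t))) * (y(q:=t)) (i, \<delta> i)) = (\<lambda>t. G x * y (i, \<delta> i))"
      by auto
    then show ?thesis using False q by simp
  next
    case True
    define x0 where "x0 = (\<chi> k. if k = j then 0 else x $ k)"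
    define e :: "real ^ 'm" where "e = axis j 1"
    have ad: "adults \<delta> (y(q:=t)) = x0 + t *\<^sub>R e" for t
      using True q unfolding x0_def e_def x_def adults_def by (subst Finite_Cartesian_Product.vec_eq_iff) (auto simp: axis_def)
    have x: "x0 + y q *\<^sub>R e = x"
      using True q unfolding x0_def e_def x_def adults_def by (subst Finite_Cartesian_Product.vec_eq_iff) (auto simp: axis_def)
    have gam: "((\<lambda>t. x0 + t *\<^sub>R e) has_derivative (\<lambda>h. h *\<^sub>R e)) (at (y q))"
      by (auto intro!: derivative_eq_intros)
    define F where "F = frechet_derivative G (at x)"
    have GF: "(G has_derivative F) (at x)" unfolding F_def using Gd frechet_derivative_works by blast
    have GF': "(G has_derivative F) (at (x0 + y q *\<^sub>R e))" using GF x by simp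
    have ch: "((\<lambda>t. G (x0 + t *\<^sub>R e)) has_derivative (\<lambda>h. F (h *\<^sub>R e))) (at (y q))"
      using diff_chain_at[OF gam GF'] by (simp add: o_def)
    have lin: "linear F" using GF has_derivative_linear by blast
    have "(\<lambda>h. F (h *\<^sub>R e)) = (\<lambda>h. F e * h)" using lin by (auto simp: linear_cmul intro!: ext)
    hence d1: "((\<lambda>t. G (x0 + t *\<^sub>R e)) has_real_derivative F e) (at (y q))"
      using ch unfolding has_field_derivative_def by (metis (no_types) mult.commute)
    have pd: "pderiv_at G x j = F e" unfolding pderiv_at_def F_def e_def by simp
    show ?thesis
    proof (cases "j = i")
      case True2: True
      have eqf: "(\<lambda>t. G (adults \<delta> (y(q:=t))) * (y(q:=t)) (i, \<delta> i)) = (\<lambda>t. G (x0 + t *\<^sub>R e) * t)"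
        using ad True True2 q by auto
      have "((\<lambda>t. G (x0 + t *\<^sub>R e) * t) has_real_derivative (G (x0 + y q *\<^sub>R e) * 1 + F e * y q)) (at (y q))"
        by (rule DERIV_mult'[OF d1 DERIV_ident])
      then show ?thesis using eqf x pd True True2 q unfolding x_def by (simp add: algebra_simps)
    next
      case False2: False
      have eqf: "(\<lambda>t. G (adults \<delta> (y(q:=t))) * (y(q:=t)) (i, \<delta> i)) = (\<lambda>t. G (x0 + t *\<^sub>R e) * y (i, \<delta> i))"
        using ad False2 q by auto
      have "((\<lambda>t. G (x0 + t *\<^sub>R e) * y (i, \<delta> i)) has_real_derivative (F e * y (i, \<delta> i))) (at (y q))"
        by (rule DERIV_cmult_right[OF d1])
      then show ?thesis using eqf x pd True False2 q unfolding x_def by (simp add: algebra_simps)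
    qed
  qed
qed


lemma jac_row0_pos:
  assumes d: "0 < \<delta> i" and Gd: "\<And>i x. G i differentiable (at x)"
  shows "jacobian \<delta> \<sigma> G y (i, 0) q = (if snd q = \<delta> (fst q) then y (i, \<delta> i) * pderiv_at (G i) (adults \<delta> y) (fst q)
        + (if fst q = i then G i (adults \<delta> y) else 0) else 0)"
proof -
  have "(\<lambda>t. hmap \<delta> \<sigma> G (y(q:=t)) (i, 0)) = (\<lambda>t. G i (adults \<delta> (y(q:=t))) * (y(q:=t)) (i, \<delta> i))"
    using d by (simp add: hmap_def)
  then show ?thesis unfolding jacobian_def using DERIV_imp_deriv[OF G_part[OF Gd]] by simp
qed

lemma jac_row0_zero:
  assumes d: "\<delta> i = 0" and Gd: "\<And>i x. G i differentiable (at x)"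
  shows "jacobian \<delta> \<sigma> G y (i, 0) q = (if q = (i, 0) then \<sigma> i 0 else 0) +
        (if snd q = \<delta> (fst q) then y (i, \<delta> i) * pderiv_at (G i) (adults \<delta> y) (fst q)
        + (if fst q = i then G i (adults \<delta> y) else 0) else 0)"
proof -
  have "(\<lambda>t. hmap \<delta> \<sigma> G (y(q:=t)) (i, 0)) = (\<lambda>t. \<sigma> i 0 * (y(q:=t)) (i, 0) + G i (adults \<delta> (y(q:=t))) * (y(q:=t)) (i, \<delta> i))"
    using d by (simp add: hmap_def)
  moreover have "((\<lambda>t. \<sigma> i 0 * (y(q:=t)) (i, 0) + G i (adults \<delta> (y(q:=t))) * (y(q:=t)) (i, \<delta> i)) has_real_derivative
     (\<sigma> i 0 * (if q = (i, 0) then 1 else 0) + (if snd q = \<delta> (fst q) then y (i, \<delta> i) * pderiv_at (G i) (adults \<delta> y) (fst q)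
        + (if fst q = i then G i (adults \<delta> y) else 0) else 0))) (at (y q))"
    by (intro DERIV_add DERIV_cmult upd_deriv G_part Gd)
  ultimately show ?thesis unfolding jacobian_def using DERIV_imp_deriv by fastforce
qed

lemma jac_row_a:
  assumes a: "0 < a" "a \<le> \<delta> i"
  shows "jacobian \<delta> \<sigma> G y (i, a) q = (if q = (i, a - 1) then \<sigma> i (a - 1) else 0)
     + (if a = \<delta> i \<and> q = (i, \<delta> i) then \<sigma> i (\<delta> i) else 0)"
proof -
  have "(\<lambda>t. hmap \<delta> \<sigma> G (y(q:=t)) (i, a)) = (\<lambda>t. \<sigma> i (a - 1) * (y(q:=t)) (i, a - 1) +
      (if a = \<delta> i then \<sigma> i (\<delta> i) * (y(q:=t)) (i, \<delta> i) else 0))"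
    using a by (auto simp: hmap_def intro!: ext)
  moreover have "((\<lambda>t. \<sigma> i (a - 1) * (y(q:=t)) (i, a - 1) +
      (if a = \<delta> i then \<sigma> i (\<delta> i) * (y(q:=t)) (i, \<delta> i) else 0)) has_real_derivative
     (\<sigma> i (a - 1) * (if q = (i, a - 1) then 1 else 0) + (if a = \<delta> i then \<sigma> i (\<delta> i) * (if q = (i, \<delta> i) then 1 else 0) else 0))) (at (y q))"
  proof (cases "a = \<delta> i")
    case True
    show ?thesis by (simp only: True simp_thms if_True) (intro DERIV_add DERIV_cmult upd_deriv)
  next
    case False
    show ?thesis by (simp only: False simp_thms if_False) (intro DERIV_add DERIV_cmult upd_deriv DERIV_const)
  qed
  ultimately show ?thesis unfolding jacobian_def using DERIV_imp_deriv by fastforce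
qed


lemma adult_sum:
  fixes f :: "'m::finite \<Rightarrow> real" and S :: "('m \<times> nat) set" and \<delta> :: "'m \<Rightarrow> nat"
  assumes fin: "finite S" and nn: "\<forall>j. f j \<ge> 0"
  shows "(\<Sum>q\<in>S. if snd q = \<delta> (fst q) then f (fst q) else 0) \<le> (\<Sum>j\<in>{j. \<exists>a. (j, a) \<in> S}. f j)"
proof -
  let ?A = "{q\<in>S. snd q = \<delta> (fst q)}"
  have "(\<Sum>q\<in>S. if snd q = \<delta> (fst q) then f (fst q) else 0) = (\<Sum>q\<in>?A. f (fst q))"
    using sum.inter_filter[OF fin, of "\<lambda>q. f (fst q)" "\<lambda>q. snd q = \<delta> (fst q)"] by simp
  also have "\<dots> = (\<Sum>j\<in>fst ` ?A. f j)"
  proof (subst sum.reindex)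
    show "inj_on fst ?A" by (auto intro!: inj_onI simp: prod_eq_iff)
  qed simp
  also have "\<dots> \<le> (\<Sum>j\<in>{j. \<exists>a. (j, a) \<in> S}. f j)"
    using nn by (intro sum_mono2) force+
  finally show ?thesis .
qed

lemma nodes_finite: "finite (nodes (\<delta> :: 'm::finite \<Rightarrow> nat))"
proof -
  have "nodes \<delta> \<subseteq> (\<Union>i. {i} \<times> {..\<delta> i})" unfolding nodes_def by auto
  moreover have "finite (\<Union>i. {i} \<times> {..\<delta> i})" by auto
  ultimately show ?thesis using finite_subset by blast
qed

theorem theorem3:
  fixes \<delta> :: "'m::finite \<Rightarrow> nat"
    and \<sigma> :: "'m \<Rightarrow> nat \<Rightarrow> real"
    and G :: "'m \<Rightarrow> real ^ 'm \<Rightarrow> real"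
    and ystar :: "'m \<times> nat \<Rightarrow> real"
    and r :: nat
    and \<alpha> :: "nat \<Rightarrow> ('m \<times> nat) set"
  assumes sigma_imm: "\<And>i a. a < \<delta> i \<Longrightarrow> 0 < \<sigma> i a \<and> \<sigma> i a \<le> 1"
    and sigma_ad: "\<And>i. 0 < \<sigma> i (\<delta> i) \<and> \<sigma> i (\<delta> i) < 1"
    and G_diff: "\<And>i x. G i differentiable (at x)"
    and equil: "\<forall>p\<in>nodes \<delta>. hmap \<delta> \<sigma> G ystar p = ystar p"
    and interior: "\<And>i. ystar (i, \<delta> i) > 0"
    and part_ne: "\<forall>w<r. \<alpha> w \<noteq> {}"
    and part_disj: "\<forall>u<r. \<forall>w<r. u \<noteq> w \<longrightarrow> \<alpha> u \<inter> \<alpha> w = {}"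
    and part_cover: "(\<Union>w<r. \<alpha> w) = nodes \<delta>"
    and lower_tri: "\<forall>u<r. \<forall>w<r. u < w \<longrightarrow>
                      (\<forall>p\<in>\<alpha> u. \<forall>q\<in>\<alpha> w. jacobian \<delta> \<sigma> G ystar p q = 0)"
    and diag_blocks: "\<forall>w<r. irreducible_block (\<alpha> w) (jacobian \<delta> \<sigma> G ystar) \<or>
                      (\<exists>p. \<alpha> w = {p} \<and> jacobian \<delta> \<sigma> G ystar p p = 0)"
    and cond: "\<forall>w<r. \<forall>i\<in>{i. \<exists>a. (i, a) \<in> \<alpha> w}.
        (\<bar>G i (adults \<delta> ystar) + ystar (i, \<delta> i) * pderiv_at (G i) (adults \<delta> ystar) i\<bar>
          + (\<Sum>j\<in>{j. \<exists>a. (j, a) \<in> \<alpha> w} - {i}.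
               \<bar>ystar (i, \<delta> i) * pderiv_at (G i) (adults \<delta> ystar) j\<bar>))
        * (\<Prod>a<\<delta> i. \<sigma> i a) < 1 - \<sigma> i (\<delta> i)"
  shows "spectral_radius_on (nodes \<delta>) (jacobian \<delta> \<sigma> G ystar) < 1"
proof -
  define J where "J = jacobian \<delta> \<sigma> G ystar"
  define N where "N = nodes \<delta>"
  define x where "x = adults \<delta> ystar"
  have finN: "finite N" unfolding N_def by (rule nodes_finite)
  have neN: "N \<noteq> {}" unfolding N_def nodes_def by auto
  have allev: "cmod c < 1" if ev: "is_eigenvalue_on N J c" for c
  proof -
    obtain u where unz: "\<exists>p\<in>N. u p \<noteq> 0"
      and ueq: "\<forall>p\<in>N. (\<Sum>q\<in>N. complex_of_real (J p q) * u q) = c * u p"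
      using ev unfolding is_eigenvalue_on_def by blast
    define W where "W = {w. w < r \<and> (\<exists>p\<in>\<alpha> w. u p \<noteq> 0)}"
    have "W \<noteq> {}"
    proof -
      obtain p where "p \<in> N" "u p \<noteq> 0" using unz by auto
      then obtain w where "w < r" "p \<in> \<alpha> w" using part_cover unfolding N_def by auto
      then show ?thesis unfolding W_def using \<open>u p \<noteq> 0\<close> by auto
    qed
    then obtain w1 where "w1 \<in> W" by auto
    define w0 where "w0 = (LEAST w. w \<in> W)"
    have w0W: "w0 \<in> W" unfolding w0_def using \<open>w1 \<in> W\<close> by (rule LeastI)
    have w0r: "w0 < r" and w0nz: "\<exists>p\<in>\<alpha> w0. u p \<noteq> 0" using w0W unfolding W_def by auto
    have below: "\<And>w p. w < w0 \<Longrightarrow> p \<in> \<alpha> w \<Longrightarrow> u p = 0"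
    proof -
      fix w p assume "w < w0" "p \<in> \<alpha> w"
      hence "w \<notin> W" unfolding w0_def by (metis not_less_Least)
      thus "u p = 0" using \<open>w < w0\<close> w0r \<open>p \<in> \<alpha> w\<close> unfolding W_def by auto
    qed
    define S where "S = \<alpha> w0"
    have SN: "S \<subseteq> N" unfolding S_def N_def using part_cover w0r by auto
    have finS: "finite S" using SN finN finite_subset by blast
    have beq: "\<forall>p\<in>S. (\<Sum>q\<in>S. complex_of_real (J p q) * u q) = c * u p"
    proof
      fix p assume pS: "p \<in> S"
      have "(\<Sum>q\<in>N. complex_of_real (J p q) * u q) = (\<Sum>q\<in>S. complex_of_real (J p q) * u q)"
      proof (rule sum.mono_neutral_right[OF finN SN], rule ballI)
        fix q assume qNS: "q \<in> N - S"
        then obtain w where w: "w < r" "q \<in> \<alpha> w" using part_cover unfolding N_def by auto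
        have "w \<noteq> w0" using w qNS unfolding S_def by auto
        show "complex_of_real (J p q) * u q = 0"
        proof (cases "w < w0")
          case True then show ?thesis using below w by simp
        next
          case False
          hence "w0 < w" using \<open>w \<noteq> w0\<close> by simp
          hence "J p q = 0" using lower_tri w0r w pS unfolding S_def J_def by blast
          then show ?thesis by simp
        qed
      qed
      then show "(\<Sum>q\<in>S. complex_of_real (J p q) * u q) = c * u p" using ueq pS SN by auto
    qed
    define D where "D = {i. \<exists>a. (i, a) \<in> S}"
    have finD: "finite D" by simp
    define B where "B i = \<bar>G i x + ystar (i, \<delta> i) * pderiv_at (G i) x i\<bar>
          + (\<Sum>j\<in>D - {i}. \<bar>ystar (i, \<delta> i) * pderiv_at (G i) x j\<bar>)" for i
    define P where "P i = (\<Prod>a<\<delta> i. \<sigma> i a)" for i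
    define z where "z i = 1 - \<sigma> i (\<delta> i)" for i
    define \<epsilon> where "\<epsilon> i = (z i - P i * B i) / (2 * P i * real (\<delta> i))" for i
    define wt where "wt q = (if snd q = \<delta> (fst q) then 1
        else (\<Prod>k<snd q. \<sigma> (fst q) k) * (B (fst q) + (real (snd q) + 1) * \<epsilon> (fst q)))" for q
    have cB: "\<And>i. i \<in> D \<Longrightarrow> B i * P i < z i"
      using cond w0r unfolding B_def P_def z_def D_def S_def x_def by blast
    have Ppos: "\<And>i. P i > 0" unfolding P_def using sigma_imm by (intro prod_pos) auto
    have Bnn: "\<And>i. B i \<ge> 0" unfolding B_def by (intro add_nonneg_nonneg sum_nonneg) auto
    have epos: "\<And>i. i \<in> D \<Longrightarrow> 0 < \<delta> i \<Longrightarrow> \<epsilon> i > 0"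
    proof -
      fix i assume "i \<in> D" "0 < \<delta> i"
      hence "z i - P i * B i > 0" using cB[of i] by (simp add: mult.commute)
      thus "\<epsilon> i > 0" unfolding \<epsilon>_def using Ppos[of i] \<open>0 < \<delta> i\<close> by simp
    qed
    have pwt: "\<And>i a. i \<in> D \<Longrightarrow> a < \<delta> i \<Longrightarrow> (\<Prod>k<a. \<sigma> i k) > 0"
      using sigma_imm by (intro prod_pos) auto
    have wtpos: "\<And>i a. i \<in> D \<Longrightarrow> a \<le> \<delta> i \<Longrightarrow> wt (i, a) > 0"
    proof -
      fix i a assume iD: "i \<in> D" and a: "a \<le> \<delta> i"
      show "wt (i, a) > 0"
      proof (cases "a = \<delta> i")
        case True then show ?thesis unfolding wt_def by simp
      next
        case False
        hence "a < \<delta> i" using a by simp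
        hence "\<epsilon> i > 0" using epos[OF iD] by simp
        hence "(real a + 1) * \<epsilon> i > 0" by simp
        hence "B i + (real a + 1) * \<epsilon> i > 0" using Bnn[of i] by linarith
        then show ?thesis unfolding wt_def using False pwt[OF iD \<open>a < \<delta> i\<close>] by simp
      qed
    qed
    have inS: "\<And>i a. (i, a) \<in> S \<Longrightarrow> i \<in> D \<and> a \<le> \<delta> i"
      using SN unfolding D_def N_def nodes_def by auto
    have vpos: "\<forall>p\<in>S. wt p > 0" using inS wtpos by auto
    define gp where "gp i j = ystar (i, \<delta> i) * pderiv_at (G i) x j + (if j = i then G i x else 0)" for i j
    have gpsum: "\<And>i. i \<in> D \<Longrightarrow> (\<Sum>j\<in>D. \<bar>gp i j\<bar>) = B i"
    proof -
      fix i assume iD: "i \<in> D"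
      have "(\<Sum>j\<in>D. \<bar>gp i j\<bar>) = \<bar>gp i i\<bar> + (\<Sum>j\<in>D - {i}. \<bar>gp i j\<bar>)"
        using sum.remove[OF finD iD] by simp
      also have "(\<Sum>j\<in>D - {i}. \<bar>gp i j\<bar>) = (\<Sum>j\<in>D - {i}. \<bar>ystar (i, \<delta> i) * pderiv_at (G i) x j\<bar>)"
        unfolding gp_def by (intro sum.cong) auto
      finally show "(\<Sum>j\<in>D. \<bar>gp i j\<bar>) = B i" unfolding B_def gp_def by (simp add: add.commute)
    qed
    have adsum: "(\<Sum>q\<in>S. if snd q = \<delta> (fst q) then \<bar>gp i (fst q)\<bar> else 0) \<le> B i" if iD: "i \<in> D" for i
      using adult_sum[OF finS, of "\<lambda>j. \<bar>gp i j\<bar>" \<delta>] gpsum[OF iD] unfolding D_def by simp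
    have rows: "\<forall>p\<in>S. (\<Sum>q\<in>S. \<bar>J p q\<bar> * wt q) < wt p"
    proof
      fix p assume pS: "p \<in> S"
      obtain i a where p: "p = (i, a)" by fastforce
      have iD: "i \<in> D" and aN: "a \<le> \<delta> i" using inS pS p by auto
      have cBi: "B i * P i < z i" using cB[OF iD] .
      have sig: "\<And>k. k < \<delta> i \<Longrightarrow> 0 < \<sigma> i k" using sigma_imm by blast
      have sd: "0 < \<sigma> i (\<delta> i)" "\<sigma> i (\<delta> i) < 1" using sigma_ad by auto
      have J0: "J (i, 0) q = (if snd q = \<delta> (fst q) then gp i (fst q) else 0)" if "0 < \<delta> i" for q
        unfolding J_def gp_def x_def using jac_row0_pos[of \<delta> i G \<sigma> ystar q, OF that G_diff] by simp
      have wtad: "\<And>q. snd q = \<delta> (fst q) \<Longrightarrow> wt q = 1" unfolding wt_def by simp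
      consider (A0) "0 < \<delta> i" "a = 0" | (Amid) "0 < a" "a < \<delta> i" | (Atop) "0 < a" "a = \<delta> i"
        | (Z) "\<delta> i = 0" using aN by linarith
      then show "(\<Sum>q\<in>S. \<bar>J p q\<bar> * wt q) < wt p"
      proof cases
        case A0
        have "(\<Sum>q\<in>S. \<bar>J p q\<bar> * wt q) = (\<Sum>q\<in>S. if snd q = \<delta> (fst q) then \<bar>gp i (fst q)\<bar> else 0)"
          using A0 p J0 wtad by (intro sum.cong) auto
        also have "\<dots> \<le> B i" by (rule adsum[OF iD])
        also have "\<dots> < wt p" using A0 p epos[OF iD] unfolding wt_def by simp
        finally show ?thesis .
      next
        case Amid
        have Ja: "J p q = (if q = (i, a - 1) then \<sigma> i (a - 1) else 0)" for q
          unfolding J_def p using jac_row_a[of a \<delta> i \<sigma> G ystar q] Amid by simp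
        have "(\<Sum>q\<in>S. \<bar>J p q\<bar> * wt q) = (\<Sum>q\<in>S. if q = (i, a - 1) then \<sigma> i (a - 1) * wt (i, a - 1) else 0)"
        proof (rule sum.cong[OF refl])
          fix q assume "q \<in> S"
          have "0 < \<sigma> i (a - 1)" using sig Amid by simp
          then show "\<bar>J p q\<bar> * wt q = (if q = (i, a - 1) then \<sigma> i (a - 1) * wt (i, a - 1) else 0)"
            using Ja[of q] by simp
        qed
        also have "\<dots> = (if (i, a - 1) \<in> S then \<sigma> i (a - 1) * wt (i, a - 1) else 0)"
          using finS by (simp add: sum.delta)
        also have "\<dots> \<le> \<sigma> i (a - 1) * wt (i, a - 1)"
        proof -
          have "0 < \<sigma> i (a - 1)" "0 < wt (i, a - 1)" using sig wtpos[OF iD] Amid by auto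
          then show ?thesis by simp
        qed
        also have "\<dots> = (\<Prod>k<a. \<sigma> i k) * (B i + real a * \<epsilon> i)"
        proof -
          have a1: "a = Suc (a - 1)" using Amid by simp
          have "(\<Prod>k<a. \<sigma> i k) = (\<Prod>k<a - 1. \<sigma> i k) * \<sigma> i (a - 1)"
            by (subst a1) (simp add: prod.lessThan_Suc)
          moreover have "real (a - 1) + 1 = real a" using Amid by (simp add: of_nat_diff)
          ultimately show ?thesis unfolding wt_def using Amid by simp
        qed
        also have "\<dots> < (\<Prod>k<a. \<sigma> i k) * (B i + (real a + 1) * \<epsilon> i)"
          using pwt[OF iD \<open>a < \<delta> i\<close>] epos[OF iD] Amid by (intro mult_strict_left_mono) (auto simp: algebra_simps)
        also have "\<dots> = wt p" unfolding wt_def p using Amid by simp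
        finally show ?thesis .
      next
        case Atop
        have Ja: "J p q = (if q = (i, a - 1) then \<sigma> i (a - 1) else 0) + (if q = (i, \<delta> i) then \<sigma> i (\<delta> i) else 0)" for q
          unfolding J_def p using jac_row_a[of a \<delta> i \<sigma> G ystar q] Atop by simp
        have "(\<Sum>q\<in>S. \<bar>J p q\<bar> * wt q) = (\<Sum>q\<in>S. (if q = (i, a - 1) then \<sigma> i (a - 1) * wt (i, a - 1) else 0)
              + (if q = (i, \<delta> i) then \<sigma> i (\<delta> i) else 0))"
        proof (rule sum.cong[OF refl])
          fix q assume "q \<in> S"
          have "0 < \<sigma> i (a - 1)" using sig Atop by simp
          moreover have "(i, a - 1) \<noteq> (i, \<delta> i)" using Atop by simp
          ultimately show "\<bar>J p q\<bar> * wt q = (if q = (i, a - 1) then \<sigma> i (a - 1) * wt (i, a - 1) else 0)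
              + (if q = (i, \<delta> i) then \<sigma> i (\<delta> i) else 0)"
            using Ja[of q] sd by (auto simp: wt_def)
        qed
        also have "\<dots> = (if (i, a - 1) \<in> S then \<sigma> i (a - 1) * wt (i, a - 1) else 0)
              + (if (i, \<delta> i) \<in> S then \<sigma> i (\<delta> i) else 0)"
          using finS by (simp add: sum.distrib sum.delta)
        also have "\<dots> \<le> \<sigma> i (a - 1) * wt (i, a - 1) + \<sigma> i (\<delta> i)"
        proof -
          have "0 < \<sigma> i (a - 1)" "0 < wt (i, a - 1)" using sig wtpos[OF iD] Atop by auto
          then show ?thesis using sd by (intro add_mono) auto
        qed
        also have "\<sigma> i (a - 1) * wt (i, a - 1) = P i * (B i + real (\<delta> i) * \<epsilon> i)"
        proof -
          have a1: "\<delta> i = Suc (a - 1)" using Atop by simp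
          have "P i = (\<Prod>k<a - 1. \<sigma> i k) * \<sigma> i (a - 1)"
            unfolding P_def by (subst a1) (simp add: prod.lessThan_Suc)
          moreover have "real (a - 1) + 1 = real (\<delta> i)" using Atop by (simp add: of_nat_diff)
          ultimately show ?thesis unfolding wt_def using Atop by simp
        qed
        also have "P i * (B i + real (\<delta> i) * \<epsilon> i) = P i * B i + (z i - P i * B i) / 2"
          unfolding \<epsilon>_def using Ppos[of i] Atop by (simp add: field_simps)
        also have "P i * B i + (z i - P i * B i) / 2 + \<sigma> i (\<delta> i) < 1"
          using cBi unfolding z_def by (simp add: field_simps mult.commute)
        also have "1 = wt p" unfolding wt_def p using Atop by simp
        finally show ?thesis by simp
      next
        case Z
        have a0: "a = 0" using Z aN by simp
        have Jz: "J p q = (if q = (i, 0) then \<sigma> i 0 else 0) + (if snd q = \<delta> (fst q) then gp i (fst q) else 0)" for q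
          unfolding J_def p a0 gp_def x_def using jac_row0_zero[of \<delta> i G \<sigma> ystar q, OF Z G_diff] by simp
        have tb: "\<bar>J p q\<bar> * wt q \<le> (if q = (i, 0) then \<sigma> i 0 else 0) + (if snd q = \<delta> (fst q) then \<bar>gp i (fst q)\<bar> else 0)" for q
        proof (cases "snd q = \<delta> (fst q)")
          case True
          have "\<bar>J p q\<bar> \<le> \<bar>if q = (i, 0) then \<sigma> i 0 else 0\<bar> + \<bar>gp i (fst q)\<bar>" using Jz True by (simp add: abs_triangle_ineq)
          then show ?thesis using True wtad sd Z by auto
        next
          case False
          hence "q \<noteq> (i, 0)" using Z by auto
          then show ?thesis using False Jz by simp
        qed
        have "(\<Sum>q\<in>S. \<bar>J p q\<bar> * wt q) \<le> (\<Sum>q\<in>S. (if q = (i, 0) then \<sigma> i 0 else 0) + (if snd q = \<delta> (fst q) then \<bar>gp i (fst q)\<bar> else 0))"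
          by (rule sum_mono[OF tb])
        also have "\<dots> = (if (i, 0) \<in> S then \<sigma> i 0 else 0) + (\<Sum>q\<in>S. if snd q = \<delta> (fst q) then \<bar>gp i (fst q)\<bar> else 0)"
          using finS by (simp add: sum.distrib sum.delta)
        also have "\<dots> \<le> \<sigma> i 0 + B i" using adsum[OF iD] sd Z by (intro add_mono) auto
        also have "\<dots> < 1" using cBi Z unfolding P_def z_def by simp
        also have "1 = wt p" unfolding wt_def p using Z a0 by simp
        finally show ?thesis .
      qed
    qed
    show "cmod c < 1" by (rule weighted_bound[OF finS beq _ vpos rows]) (use w0nz S_def in auto)
  qed
  have fe: "finite {c. is_eigenvalue_on N J c} \<and> {c. is_eigenvalue_on N J c} \<noteq> {}"
    by (rule eig_fin_ne[OF finN neN])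
  have eqs: "{cmod c |c. is_eigenvalue_on N J c} = cmod ` {c. is_eigenvalue_on N J c}" by auto
  have "spectral_radius_on N J \<in> cmod ` {c. is_eigenvalue_on N J c}"
    unfolding spectral_radius_on_def eqs using fe by (intro Max_in) auto
  then have "spectral_radius_on N J < 1" using allev by auto
  then show ?thesis unfolding N_def J_def .
qed

end
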